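(* Let $F_i=F$ for all $i\in[A]$, suppose $\sum_{k\ge1}1/F(k)=\infty$ and that $L(k):=F(k)/k$ is increasing. Then there is an almost surely finite random constant $c>0$ such that $\chi_i(n)\ge e^{-cL(n)}$ for all $n\ge1$ and all $i\in[A]$.
   Context: Fix $A\ge2$, $[A]=\{1,\dots,A\}$. The generalized Pólya urn with feedback $F:\mathbb{N}\to(0,\infty)$ is the Markov chain $X(n)\in\mathbb{N}^A$ with $X_i(0)\ge1$ and $\mathbb{P}(X(n+1)=X(n)+e^{(i)}\mid X(n))=F(X_i(n))/\sum_jF(X_j(n))$; $N=\sum_jX_j(0)$ and $\chi_i(n)=X_i(n)/(N+n)$. *)

theory Defs
  imports "HOL-Probability.Probability"
begin

text \<open>Colours are the elements of a finite type 'a (so A = CARD('a)).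
  A configuration is a map 'a \<Rightarrow> nat.  The event that the first n+1 states
  of the process X equal the history h.\<close>
definition urn_hist :: "'m measure \<Rightarrow> (nat \<Rightarrow> 'm \<Rightarrow> 'a \<Rightarrow> nat) \<Rightarrow> nat \<Rightarrow> (nat \<Rightarrow> 'a \<Rightarrow> nat) \<Rightarrow> 'm set"
  where "urn_hist M X n h = {\<omega> \<in> space M. \<forall>k\<le>n. X k \<omega> = h k}"

text \<open>X is a generalized Polya urn with feedback F (same for all colours) and
  deterministic initial configuration x0: the law of X is that of the Markov
  chain which adds a ball of colour i with probability F(X_i)/sum_j F(X_j).\<close>
definition polya_urn :: "'m measure \<Rightarrow> (nat \<Rightarrow> real) \<Rightarrow> ('a::finite \<Rightarrow> nat) \<Rightarrow> (nat \<Rightarrow> 'm \<Rightarrow> 'a \<Rightarrow> nat) \<Rightarrow> bool"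
  where "polya_urn M F x0 X \<longleftrightarrow>
     prob_space M \<and>
     (\<forall>n. X n \<in> M \<rightarrow>\<^sub>M count_space UNIV) \<and>
     (AE \<omega> in M. X 0 \<omega> = x0) \<and>
     (\<forall>n h i. measure M (urn_hist M X n h \<inter> {\<omega>. X (Suc n) \<omega> = (h n)(i := h n i + 1)})
              = measure M (urn_hist M X n h) * (F (h n i) / (\<Sum>j\<in>UNIV. F (h n j))))"

end

theory Submission
  imports Defs
begin


definition Phi :: "(nat \<Rightarrow> real) \<Rightarrow> nat \<Rightarrow> real" where
  "Phi F z = (\<Sum>k\<in>{1..<z}. 1 / F k)"

definition Dpot :: "(nat \<Rightarrow> real) \<Rightarrow> ('a::finite \<Rightarrow> nat) \<Rightarrow> real" where
  "Dpot F y = (\<Sum>i\<in>UNIV. Phi F (sum y UNIV) - Phi F (y i))"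

lemma Phi_diff:
  assumes "1 \<le> a" "a \<le> b"
  shows "Phi F b - Phi F a = (\<Sum>k\<in>{a..<b}. 1 / F k)"
  using sum.atLeastLessThan_concat[of 1 a b "\<lambda>k. 1 / F k"] assms
  by (simp add: Phi_def)

lemma Phi_Suc:
  assumes "1 \<le> a"
  shows "Phi F (Suc a) = Phi F a + 1 / F a"
  using assms by (simp add: Phi_def sum.atLeastLessThan_Suc)

lemma Phi_mono:
  assumes Fpos: "\<And>k. F k > 0" and "a \<le> b"
  shows "Phi F a \<le> Phi F b"
  unfolding Phi_def using assms(2)
  by (intro sum_mono2) (auto intro: less_imp_le[OF Fpos] simp: )

lemma L_mono:
  assumes Lmono: "\<And>k. k \<ge> 1 \<Longrightarrow> F k / real k \<le> F (Suc k) / real (Suc k)"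
    and "1 \<le> a" "a \<le> b"
  shows "F a / real a \<le> F b / real b"
  using assms(3,2)
proof (induction b rule: dec_induct)
  case base then show ?case by simp
next
  case (step n) then show ?case using Lmono[of n] \<open>1 \<le> a\<close> by linarith
qed

lemma elem_le_sum:
  fixes y :: "'a::finite \<Rightarrow> nat"
  shows "y i \<le> sum y UNIV"
  by (rule member_le_sum) auto

lemma Dpot_nonneg:
  assumes Fpos: "\<And>k. F k > 0"
  shows "0 \<le> Dpot F (y::'a::finite \<Rightarrow> nat)"
  unfolding Dpot_def
  by (intro sum_nonneg) (simp add: Phi_mono[OF Fpos, OF elem_le_sum[of y]])

lemma Dpot_ge:
  assumes Fpos: "\<And>k. F k > 0"
  shows "Phi F (sum y UNIV) - Phi F (y i) \<le> Dpot F (y::'a::finite \<Rightarrow> nat)"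
  unfolding Dpot_def
  by (rule member_le_sum) (auto simp add: Phi_mono[OF Fpos, OF elem_le_sum[of y]])

lemma W_le:
  fixes y :: "'a::finite \<Rightarrow> nat"
  assumes Fpos: "\<And>k. F k > 0"
    and Lmono: "\<And>k. k \<ge> 1 \<Longrightarrow> F k / real k \<le> F (Suc k) / real (Suc k)"
    and y1: "\<And>j. y j \<ge> 1"
  shows "(\<Sum>j\<in>UNIV. F (y j)) \<le> F (sum y UNIV)"
proof -
  let ?S = "sum y UNIV"
  have S1: "?S \<ge> 1" using y1 elem_le_sum[of y] order_trans by blast
  have "F (y j) \<le> real (y j) * (F ?S / real ?S)" for j
  proof -
    have "F (y j) / real (y j) \<le> F ?S / real ?S"
      by (rule L_mono[OF Lmono y1 elem_le_sum])
    moreover have "real (y j) > 0" using y1[of j] by simp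
    ultimately show ?thesis by (simp add: field_simps)
  qed
  then have "(\<Sum>j\<in>UNIV. F (y j)) \<le> (\<Sum>j\<in>UNIV. real (y j) * (F ?S / real ?S))"
    by (rule sum_mono)
  also have "\<dots> = real ?S * (F ?S / real ?S)"
    by (metis of_nat_sum sum_distrib_right)
  also have "\<dots> = F ?S"
  proof -
    have "real ?S > 0" using S1 by linarith
    then show ?thesis by (metis nonzero_mult_div_cancel_left times_divide_eq_right less_irrefl)
  qed
  finally show ?thesis .
qed

lemma super:
  fixes y :: "'a::finite \<Rightarrow> nat"
  assumes Fpos: "\<And>k. F k > 0"
    and Lmono: "\<And>k. k \<ge> 1 \<Longrightarrow> F k / real k \<le> F (Suc k) / real (Suc k)"
    and y1: "\<And>j. y j \<ge> 1"
  shows "(\<Sum>j\<in>UNIV. (F (y j) / (\<Sum>l\<in>UNIV. F (y l))) * Dpot F (y(j := y j + 1))) \<le> Dpot F y"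
proof -
  let ?S = "sum y UNIV"
  let ?W = "\<Sum>l\<in>UNIV. F (y l)"
  let ?A = "real CARD('a)"
  have S1: "?S \<ge> 1" using y1 elem_le_sum[of y] order_trans by blast
  have Wpos: "?W > 0" by (intro sum_pos) (auto intro: Fpos)
  have WS: "?W \<le> F ?S" by (rule W_le[OF Fpos Lmono y1])
  have sumj: "sum (y(j := y j + 1)) UNIV = Suc ?S" for j
  proof -
    have "sum (y(j := y j + 1)) UNIV = (\<Sum>i\<in>UNIV. y i + (if i = j then 1 else 0))"
      by (intro sum.cong) auto
    also have "\<dots> = Suc ?S" by (simp add: sum.distrib)
    finally show ?thesis .
  qed
  have Dj: "Dpot F (y(j := y j + 1)) = Dpot F y + ?A / F ?S - 1 / F (y j)" for j
  proof -
    have "Dpot F (y(j := y j + 1)) = (\<Sum>i\<in>UNIV. (Phi F ?S - Phi F (y i)) + 1 / F ?S - (if i = j then 1 / F (y j) else 0))"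
      unfolding Dpot_def sumj
      by (intro sum.cong) (auto simp: Phi_Suc[OF S1] Phi_Suc[OF y1])
    also have "\<dots> = Dpot F y + ?A / F ?S - 1 / F (y j)"
      by (simp add: sum.distrib sum_subtractf Dpot_def)
    finally show ?thesis .
  qed
  have "(\<Sum>j\<in>UNIV. (F (y j) / ?W) * Dpot F (y(j := y j + 1)))
      = (\<Sum>j\<in>UNIV. (F (y j) / ?W) * (Dpot F y + ?A / F ?S) - 1 / ?W)"
  proof (intro sum.cong refl)
    fix x
    have "F (y x) / ?W * (1 / F (y x)) = 1 / ?W" using Fpos[of "y x"] by simp
    then show "(F (y x) / ?W) * Dpot F (y(x := y x + 1)) = (F (y x) / ?W) * (Dpot F y + ?A / F ?S) - 1 / ?W"
      unfolding Dj by (simp add: right_diff_distrib)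
  qed
  also have "\<dots> = ((\<Sum>j\<in>UNIV. F (y j)) / ?W) * (Dpot F y + ?A / F ?S) - ?A / ?W"
  proof -
    have "(\<Sum>j\<in>UNIV. (F (y j) / ?W) * (Dpot F y + ?A / F ?S)) = ((\<Sum>j\<in>UNIV. F (y j)) / ?W) * (Dpot F y + ?A / F ?S)"
      by (simp only: sum_distrib_right sum_divide_distrib)
    then show ?thesis by (simp add: sum_subtractf)
  qed
  also have "\<dots> = Dpot F y + ?A / F ?S - ?A / ?W"
  proof -
    have "(\<Sum>j\<in>UNIV. F (y j)) / ?W = 1" using Wpos by simp
    then show ?thesis by (simp only: mult_1_left)
  qed
  also have "\<dots> \<le> Dpot F y"
  proof -
    have "?A / F ?S \<le> ?A / ?W"
      using Wpos WS by (intro divide_left_mono) (auto intro: Fpos mult_pos_pos)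
    then show ?thesis by simp
  qed
  finally show ?thesis .
qed

lemma ln_le_harm:
  assumes "1 \<le> x" "x \<le> n"
  shows "ln (real n / real x) \<le> (\<Sum>k\<in>{x..<n}. 1 / real k)"
  using assms(2)
proof (induction n rule: dec_induct)
  case base then show ?case using assms by simp
next
  case (step n)
  have n1: "real n \<ge> 1" using step assms by simp
  have "ln (real (Suc n) / real x) = ln (real n / real x) + ln (1 + 1 / real n)"
  proof -
    have "real (Suc n) / real x = (real n / real x) * (1 + 1 / real n)"
      using n1 assms by (simp add: field_simps)
    then have "ln (real (Suc n) / real x) = ln ((real n / real x) * (1 + 1 / real n))" by (simp only:)
    also have "\<dots> = ln (real n / real x) + ln (1 + 1 / real n)"
      using n1 assms by (intro ln_mult_pos) (auto intro: add_pos_nonneg)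
    finally show ?thesis .
  qed
  also have "\<dots> \<le> (\<Sum>k\<in>{x..<n}. 1 / real k) + 1 / real n"
    using step.IH ln_add_one_self_le_self[of "1 / real n"] n1 by simp
  also have "\<dots> = (\<Sum>k\<in>{x..<Suc n}. 1 / real k)" using step by simp
  finally show ?case .
qed

lemma final_det:
  fixes y :: "'a::finite \<Rightarrow> nat"
  assumes Fpos: "\<And>k. F k > 0"
    and Lmono: "\<And>k. k \<ge> 1 \<Longrightarrow> F k / real k \<le> F (Suc k) / real (Suc k)"
    and y1: "\<And>j. 1 \<le> y j" and ys: "sum y UNIV = N + n" and n1: "n \<ge> 1"
    and Dl: "Dpot F y < lam"
  shows "real (y i) / real (N + n) \<ge> exp (- (lam + ln (1 + real N) / F 1) * (F n / real n))"
proof -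
  define S where "S = N + n"
  define x where "x = y i"
  define L where "L = F n / real n"
  define Di where "Di = Phi F S - Phi F x"
  have x1: "1 \<le> x" using y1 x_def by simp
  have xS: "x \<le> S" unfolding x_def S_def ys[symmetric] by (rule elem_le_sum)
  have LF1: "F 1 \<le> L" using L_mono[OF Lmono, of 1 n] n1 by (simp add: L_def)
  have F1: "F 1 > 0" by (rule Fpos)
  have Lpos: "L > 0" using LF1 F1 by linarith
  have Di0: "0 \<le> Di" unfolding Di_def using Phi_mono[OF Fpos xS] by simp
  have DiD: "Di \<le> Dpot F y" unfolding Di_def S_def x_def ys[symmetric] by (rule Dpot_ge[OF Fpos])
  have lnN: "ln (real S / real n) \<le> ln (1 + real N)"
  proof -
    have "real S / real n \<le> 1 + real N"
    proof -
      have "real N * 1 \<le> real N * real n" using n1 by (intro mult_left_mono) auto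
      then have "real S \<le> (1 + real N) * real n" by (simp add: S_def algebra_simps)
      moreover have "real n > 0" using n1 by simp
      ultimately show ?thesis by (simp add: pos_divide_le_eq)
    qed
    moreover have "real S / real n > 0" using n1 by (simp add: S_def)
    ultimately show ?thesis by simp
  qed
  have lnN0: "0 \<le> ln (1 + real N)" by simp
  have key: "ln (real S / real x) \<le> L * Di + ln (1 + real N)"
  proof (cases "x \<le> n")
    case True
    have "ln (real S / real x) = ln (real S / real n) + ln (real n / real x)"
    proof -
      have "real S / real x = (real S / real n) * (real n / real x)" using n1 x1 by simp
      moreover have "real S / real n > 0" "real n / real x > 0" using n1 x1 by (auto simp: S_def)
      ultimately show ?thesis by (simp only: ln_mult_pos)
    qed
    also have "ln (real n / real x) \<le> (\<Sum>k\<in>{x..<n}. 1 / real k)"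
      by (rule ln_le_harm[OF x1 True])
    also have "\<dots> \<le> (\<Sum>k\<in>{x..<n}. L * (1 / F k))"
    proof (rule sum_mono)
      fix k assume k: "k \<in> {x..<n}"
      then have "F k / real k \<le> L" unfolding L_def using x1 by (intro L_mono[OF Lmono]) auto
      moreover have "real k > 0" using k x1 by auto
      moreover have "F k > 0" by (rule Fpos)
      ultimately show "1 / real k \<le> L * (1 / F k)" by (simp add: field_simps)
    qed
    also have "\<dots> = L * (Phi F n - Phi F x)"
      by (simp add: sum_distrib_left Phi_diff[OF x1 True])
    also have "\<dots> \<le> L * Di"
      unfolding Di_def using Lpos Phi_mono[OF Fpos, of n S] by (simp add: S_def)
    finally show ?thesis using lnN by linarith
  next
    case False
    have "ln (real S / real x) \<le> ln (real S / real n)"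
      using False n1 x1 xS by (simp add: frac_le S_def divide_left_mono)
    then show ?thesis using lnN Lpos Di0 by (smt (verit) mult_nonneg_nonneg)
  qed
  have "L * Di + ln (1 + real N) \<le> (lam + ln (1 + real N) / F 1) * L"
  proof -
    have "L * Di \<le> lam * L" using Dl DiD Lpos by (simp add: mult.commute)
    moreover have "ln (1 + real N) \<le> ln (1 + real N) / F 1 * L"
    proof -
      have "1 \<le> L / F 1" using LF1 F1 by simp
      then have "ln (1 + real N) * 1 \<le> ln (1 + real N) * (L / F 1)"
        using lnN0 by (intro mult_left_mono)
      then show ?thesis by simp
    qed
    ultimately show ?thesis by (simp add: distrib_right)
  qed
  with key have k2: "ln (real S / real x) \<le> (lam + ln (1 + real N) / F 1) * L" by linarith
  have "real x / real S = exp (- ln (real S / real x))"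
    using x1 xS by (simp add: ln_div exp_diff)
  also have "\<dots> \<ge> exp (- (lam + ln (1 + real N) / F 1) * L)"
    using k2 by (simp add: algebra_simps)
  finally show ?thesis by (simp add: S_def x_def L_def)
qed



lemma sum_upd: "sum ((y::'a::finite \<Rightarrow> nat)(j := y j + 1)) UNIV = Suc (sum y UNIV)"
proof -
  have "sum (y(j := y j + 1)) UNIV = (\<Sum>i\<in>UNIV. y i + (if i = j then 1 else 0))"
    by (intro sum.cong) auto
  also have "\<dots> = Suc (sum y UNIV)" by (simp add: sum.distrib)
  finally show ?thesis .
qed

lemma upd_inj: "(y::'a \<Rightarrow> nat)(j := y j + 1) = y(j' := y j' + 1) \<Longrightarrow> j = j'"
  by (metis fun_upd_apply n_not_Suc_n Suc_eq_plus1)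

locale urnL =
  fixes M :: "'m measure" and F :: "nat \<Rightarrow> real" and x0 :: "'a::finite \<Rightarrow> nat"
    and X :: "nat \<Rightarrow> 'm \<Rightarrow> 'a \<Rightarrow> nat"
  assumes urn: "polya_urn M F x0 X"
    and Fpos: "\<And>k. F k > 0"
    and Lmono: "\<And>k. k \<ge> 1 \<Longrightarrow> F k / real k \<le> F (Suc k) / real (Suc k)"
begin

sublocale prob_space M using urn by (simp add: polya_urn_def)

lemma Xmeas: "X n \<in> M \<rightarrow>\<^sub>M count_space UNIV"
  using urn by (simp add: polya_urn_def)

lemma trans:
  "measure M (urn_hist M X n h \<inter> {\<omega>. X (Suc n) \<omega> = (h n)(i := h n i + 1)})
     = measure M (urn_hist M X n h) * (F (h n i) / (\<Sum>j\<in>UNIV. F (h n j)))"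
  using urn by (simp add: polya_urn_def)

lemma pred_sets: "{\<omega>\<in>space M. Q (X k \<omega>)} \<in> sets M"
proof -
  have "{\<omega>\<in>space M. Q (X k \<omega>)} = X k -` {y. Q y} \<inter> space M" by auto
  also have "\<dots> \<in> sets M" by (rule measurable_sets[OF Xmeas]) simp
  finally show ?thesis .
qed

lemma hist_sets: "urn_hist M X n h \<in> sets M"
proof -
  have "urn_hist M X n h = space M \<inter> (\<Inter>k\<in>{..n}. {\<omega>\<in>space M. X k \<omega> = h k})"
    by (auto simp: urn_hist_def)
  also have "\<dots> \<in> sets M" using pred_sets by auto
  finally show ?thesis .
qed

lemma hist_Suc:
  "urn_hist M X n h \<inter> {\<omega>. X (Suc n) \<omega> = z} = urn_hist M X (Suc n) (h(Suc n := z))"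
  by (auto simp: urn_hist_def le_Suc_eq)

lemma hist_step_sets: "urn_hist M X n h \<inter> {\<omega>. X (Suc n) \<omega> = z} \<in> sets M"
  unfolding hist_Suc by (rule hist_sets)

lemma cover:
  "measure M (urn_hist M X n h - (\<Union>j. {\<omega>. X (Suc n) \<omega> = (h n)(j := h n j + 1)})) = 0"
proof -
  let ?H = "urn_hist M X n h"
  define B where "B j = ?H \<inter> {\<omega>. X (Suc n) \<omega> = (h n)(j := h n j + 1)}" for j
  let ?W = "\<Sum>j\<in>UNIV. F (h n j)"
  have Wpos: "?W > 0" by (intro sum_pos) (auto intro: Fpos)
  have disj: "disjoint_family B"
    unfolding disjoint_family_on_def B_def using upd_inj[of "h n"] by auto
  have Bs: "B ` UNIV \<subseteq> sets M" unfolding B_def using hist_step_sets by auto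
  have "measure M (\<Union>j\<in>UNIV. B j) = (\<Sum>j\<in>UNIV. measure M (B j))"
    by (rule finite_measure_finite_Union[OF _ Bs]) (use disj in auto)
  also have "\<dots> = (\<Sum>j\<in>UNIV. measure M ?H * (F (h n j) / ?W))"
    unfolding B_def trans ..
  also have "\<dots> = measure M ?H * ((\<Sum>j\<in>UNIV. F (h n j)) / ?W)"
    by (simp only: sum_distrib_left[symmetric] sum_divide_distrib[symmetric])
  also have "\<dots> = measure M ?H" using Wpos by simp
  finally have U: "measure M (\<Union>j. B j) = measure M ?H" .
  have "?H - (\<Union>j. {\<omega>. X (Suc n) \<omega> = (h n)(j := h n j + 1)}) = ?H - (\<Union>j. B j)"
    unfolding B_def by auto
  moreover have "measure M (?H - (\<Union>j. B j)) = measure M ?H - measure M (\<Union>j. B j)"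
  proof (rule finite_measure_Diff)
    show "?H \<in> sets M" by (rule hist_sets)
    show "(\<Union>j. B j) \<in> sets M" using Bs by auto
    show "(\<Union>j. B j) \<subseteq> ?H" by (auto simp: B_def)
  qed
  ultimately show ?thesis using U by simp
qed

lemma cover_sets: "urn_hist M X n h - (\<Union>j. {\<omega>. X (Suc n) \<omega> = (z::'a \<Rightarrow> 'a \<Rightarrow> nat) j}) \<in> sets M"
proof -
  have "urn_hist M X n h - (\<Union>j. {\<omega>. X (Suc n) \<omega> = z j})
     = urn_hist M X n h - (\<Union>j\<in>UNIV. urn_hist M X n h \<inter> {\<omega>. X (Suc n) \<omega> = z j})" by auto
  also have "\<dots> \<in> sets M"
    by (rule sets.Diff[OF hist_sets sets.finite_UN]) (auto intro: hist_step_sets)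
  finally show ?thesis .
qed

definition "N = sum x0 UNIV"
definition "good k y \<longleftrightarrow> (\<forall>j. 1 \<le> y j) \<and> sum y UNIV = N + k"
definition "bad l k y \<longleftrightarrow> \<not> good k y \<or> l \<le> Dpot F y"
definition "E l n m = {\<omega>\<in>space M. \<exists>k\<in>{n..n+m}. bad l k (X k \<omega>)}"

lemma E_sets: "E l n m \<in> sets M"
proof -
  have "E l n m = (\<Union>k\<in>{n..n+m}. {\<omega>\<in>space M. bad l k (X k \<omega>)})"
    by (auto simp: E_def)
  also have "\<dots> \<in> sets M" using pred_sets by auto
  finally show ?thesis .
qed

lemma maxineq:
  assumes l: "l > 0" and g: "good n (h n)"
  shows "measure M (urn_hist M X n h \<inter> E l n m) \<le> measure M (urn_hist M X n h) * (Dpot F (h n) / l)"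
  using g
proof (induction m arbitrary: n h)
  case 0
  show ?case
  proof (cases "l \<le> Dpot F (h n)")
    case True
    have "measure M (urn_hist M X n h \<inter> E l n 0) \<le> measure M (urn_hist M X n h)"
      by (rule finite_measure_mono) (auto intro: hist_sets)
    also have "\<dots> \<le> measure M (urn_hist M X n h) * (Dpot F (h n) / l)"
      using True l by (intro mult_le_cancel_left1[THEN iffD2]) auto
    finally show ?thesis .
  next
    case False
    have "urn_hist M X n h \<inter> E l n 0 = {}"
      using False 0 by (auto simp: urn_hist_def E_def bad_def)
    then show ?thesis using l Dpot_nonneg[OF Fpos, where y = "h n"] by simp
  qed
next
  case (Suc m)
  let ?H = "urn_hist M X n h"
  let ?y = "h n"
  define yj where "yj j = ?y(j := ?y j + 1)" for j
  define hj where "hj j = h(Suc n := yj j)" for j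
  let ?W = "\<Sum>j\<in>UNIV. F (?y j)"
  show ?case
  proof (cases "l \<le> Dpot F (h n)")
    case True
    have "measure M (?H \<inter> E l n (Suc m)) \<le> measure M ?H"
      by (rule finite_measure_mono) (auto intro: hist_sets)
    also have "\<dots> \<le> measure M ?H * (Dpot F (h n) / l)"
      using True l by (intro mult_le_cancel_left1[THEN iffD2]) auto
    finally show ?thesis .
  next
    case False
    have y1: "\<And>j. 1 \<le> ?y j" using Suc.prems by (simp add: good_def)
    have gj: "good (Suc n) (hj j (Suc n))" for j
    proof -
      have "hj j (Suc n) = yj j" by (simp add: hj_def)
      moreover have "sum (yj j) UNIV = Suc (N + n)"
        using Suc.prems sum_upd[of "h n" j] by (simp add: yj_def good_def)
      moreover have "\<forall>i. 1 \<le> yj j i" using Suc.prems by (simp add: yj_def good_def)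
      ultimately show ?thesis unfolding good_def by simp
    qed
    have sub: "?H \<inter> E l n (Suc m) \<subseteq>
        (\<Union>j\<in>UNIV. urn_hist M X (Suc n) (hj j) \<inter> E l (Suc n) m)
        \<union> (?H - (\<Union>j. {\<omega>. X (Suc n) \<omega> = yj j}))"
    proof
      fix \<omega> assume w: "\<omega> \<in> ?H \<inter> E l n (Suc m)"
      then obtain k where k: "k \<in> {n..n + Suc m}" "bad l k (X k \<omega>)" and sp: "\<omega> \<in> space M"
        by (auto simp: E_def)
      have Xn: "X n \<omega> = h n" using w by (auto simp: urn_hist_def)
      have "k \<noteq> n" using k Xn False Suc.prems by (auto simp: bad_def)
      then have kk: "k \<in> {Suc n..Suc n + m}" using k by auto
      show "\<omega> \<in> (\<Union>j\<in>UNIV. urn_hist M X (Suc n) (hj j) \<inter> E l (Suc n) m)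
        \<union> (?H - (\<Union>j. {\<omega>. X (Suc n) \<omega> = yj j}))"
      proof (cases "\<exists>j. X (Suc n) \<omega> = yj j")
        case True
        then obtain j where j: "X (Suc n) \<omega> = yj j" by blast
        have "\<omega> \<in> urn_hist M X (Suc n) (hj j)"
          unfolding hj_def hist_Suc[symmetric] using w j by auto
        moreover have "\<omega> \<in> E l (Suc n) m" using kk k sp by (auto simp: E_def)
        ultimately show ?thesis by blast
      next
        case False
        then show ?thesis using w by auto
      qed
    qed
    have Hsj: "urn_hist M X (Suc n) (hj j) \<in> sets M" for j by (rule hist_sets)
    have "measure M (?H \<inter> E l n (Suc m)) \<le>
        measure M ((\<Union>j\<in>UNIV. urn_hist M X (Suc n) (hj j) \<inter> E l (Suc n) m)
        \<union> (?H - (\<Union>j. {\<omega>. X (Suc n) \<omega> = yj j})))"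
      by (rule finite_measure_mono[OF sub]) (use Hsj E_sets cover_sets in \<open>auto intro!: sets.Un\<close>)
    also have "\<dots> \<le> measure M (\<Union>j\<in>UNIV. urn_hist M X (Suc n) (hj j) \<inter> E l (Suc n) m)
        + measure M (?H - (\<Union>j. {\<omega>. X (Suc n) \<omega> = yj j}))"
      by (rule measure_Un_le) (use Hsj E_sets cover_sets in \<open>auto\<close>)
    also have "measure M (?H - (\<Union>j. {\<omega>. X (Suc n) \<omega> = yj j})) = 0"
      unfolding yj_def by (rule cover)
    also have "measure M (\<Union>j\<in>UNIV. urn_hist M X (Suc n) (hj j) \<inter> E l (Suc n) m)
        \<le> (\<Sum>j\<in>UNIV. measure M (urn_hist M X (Suc n) (hj j) \<inter> E l (Suc n) m))"
      by (rule finite_measure_subadditive_finite) (use Hsj E_sets in auto)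
    also have "\<dots> \<le> (\<Sum>j\<in>UNIV. measure M (urn_hist M X (Suc n) (hj j)) * (Dpot F (hj j (Suc n)) / l))"
      by (intro sum_mono Suc.IH gj)
    also have "\<dots> = (\<Sum>j\<in>UNIV. measure M ?H * ((F (?y j) / ?W) * Dpot F (yj j)) / l)"
    proof (intro sum.cong refl)
      fix j
      have "measure M (urn_hist M X (Suc n) (hj j)) = measure M ?H * (F (?y j) / ?W)"
        unfolding hj_def hist_Suc[symmetric] yj_def trans ..
      then show "measure M (urn_hist M X (Suc n) (hj j)) * (Dpot F (hj j (Suc n)) / l)
          = measure M ?H * ((F (?y j) / ?W) * Dpot F (yj j)) / l"
        by (simp add: hj_def)
    qed
    also have "\<dots> = measure M ?H * (\<Sum>j\<in>UNIV. (F (?y j) / ?W) * Dpot F (yj j)) / l"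
      by (simp add: sum_distrib_left sum_divide_distrib)
    also have "\<dots> \<le> measure M ?H * Dpot F ?y / l"
      using super[OF Fpos Lmono y1] l unfolding yj_def
      by (intro divide_right_mono mult_left_mono) auto
    finally show ?thesis by simp
  qed
qed

end


context urnL begin

lemma bound_all:
  assumes l: "l > 0" and g: "good 0 x0"
  shows "measure M {\<omega>\<in>space M. \<exists>k. bad l k (X k \<omega>)} \<le> Dpot F x0 / l"
proof -
  let ?H = "urn_hist M X 0 (\<lambda>_. x0)"
  have H: "?H = {\<omega>\<in>space M. X 0 \<omega> = x0}" by (auto simp: urn_hist_def)
  have AE0: "AE \<omega> in M. X 0 \<omega> = x0" using urn by (simp add: polya_urn_def)
  have "emeasure M {\<omega>\<in>space M. \<not> X 0 \<omega> = x0} = 0"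
    using AE0 by (subst (asm) AE_iff_measurable[OF pred_sets refl])
  moreover have "space M - ?H = {\<omega>\<in>space M. \<not> X 0 \<omega> = x0}" unfolding H by auto
  ultimately have null: "measure M (space M - ?H) = 0" by (simp add: emeasure_eq_measure)
  have D0: "0 \<le> Dpot F x0 / l" using Dpot_nonneg[OF Fpos, where y = x0] l by simp
  have Em: "measure M (E l 0 m) \<le> Dpot F x0 / l" for m
  proof -
    have "E l 0 m \<subseteq> (?H \<inter> E l 0 m) \<union> (space M - ?H)" by (auto simp: E_def)
    then have "measure M (E l 0 m) \<le> measure M ((?H \<inter> E l 0 m) \<union> (space M - ?H))"
      by (rule finite_measure_mono) (use hist_sets E_sets in auto)
    also have "\<dots> \<le> measure M (?H \<inter> E l 0 m) + measure M (space M - ?H)"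
      by (rule measure_Un_le) (use hist_sets E_sets in auto)
    also have "\<dots> = measure M (?H \<inter> E l 0 m)" using null by simp
    also have "\<dots> \<le> measure M ?H * (Dpot F x0 / l)"
      using maxineq[OF l, of 0 "\<lambda>_. x0" m] g by simp
    also have "\<dots> \<le> 1 * (Dpot F x0 / l)"
      by (intro mult_right_mono D0) simp
    finally show ?thesis by simp
  qed
  have U: "{\<omega>\<in>space M. \<exists>k. bad l k (X k \<omega>)} = (\<Union>m. E l 0 m)"
    by (auto simp: E_def) (meson atLeastAtMost_iff le0 order_refl)
  have inc: "incseq (\<lambda>m. E l 0 m)"
    by (auto simp: incseq_def E_def)
  have "(\<lambda>m. measure M (E l 0 m)) \<longlonglongrightarrow> measure M (\<Union>m. E l 0 m)"
    by (rule finite_Lim_measure_incseq) (use E_sets inc in auto)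
  then have "measure M (\<Union>m. E l 0 m) \<le> Dpot F x0 / l"
    by (rule LIMSEQ_le_const2) (use Em in auto)
  then show ?thesis unfolding U .
qed

lemma final_AE:
  assumes x0pos: "\<And>i. x0 i \<ge> 1"
  shows "AE \<omega> in M. \<exists>c>0. \<forall>n\<ge>1. \<forall>i.
           real (X n \<omega> i) / real ((\<Sum>j\<in>UNIV. x0 j) + n) \<ge> exp (- c * (F n / real n))"
proof -
  define Zl where "Zl l = {\<omega>\<in>space M. \<exists>k. bad (real (Suc l)) k (X k \<omega>)}" for l
  define Z where "Z = (\<Inter>l. Zl l)"
  have g0: "good 0 x0" using x0pos by (simp add: good_def N_def)
  have Zls: "Zl l \<in> sets M" for l
  proof -
    have "Zl l = (\<Union>k. {\<omega>\<in>space M. bad (real (Suc l)) k (X k \<omega>)})" by (auto simp: Zl_def)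
    also have "\<dots> \<in> sets M" using pred_sets by auto
    finally show ?thesis .
  qed
  have Zs: "Z \<in> sets M" unfolding Z_def using Zls by auto
  have Zb: "measure M Z \<le> Dpot F x0 / real (Suc l)" for l
  proof -
    have "measure M Z \<le> measure M (Zl l)"
      by (rule finite_measure_mono) (use Zls in \<open>auto simp: Z_def\<close>)
    also have "\<dots> \<le> Dpot F x0 / real (Suc l)"
      unfolding Zl_def by (rule bound_all[OF _ g0]) simp
    finally show ?thesis .
  qed
  have lim: "(\<lambda>l. Dpot F x0 / real (Suc l)) \<longlonglongrightarrow> 0"
    using LIMSEQ_Suc[OF lim_const_over_n[of "Dpot F x0"]] by simp
  have "measure M Z \<le> 0"
    by (rule LIMSEQ_le_const[OF lim]) (use Zb in auto)
  then have Z0: "emeasure M Z = 0" using measure_nonneg[of M Z] by (simp add: emeasure_eq_measure)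
  show ?thesis
  proof (rule AE_I[OF _ Z0 Zs])
    show "{\<omega> \<in> space M. \<not> (\<exists>c>0. \<forall>n\<ge>1. \<forall>i.
           real (X n \<omega> i) / real ((\<Sum>j\<in>UNIV. x0 j) + n) \<ge> exp (- c * (F n / real n)))} \<subseteq> Z"
    proof (rule subsetI, rule ccontr)
      fix \<omega> assume w: "\<omega> \<in> {\<omega> \<in> space M. \<not> (\<exists>c>0. \<forall>n\<ge>1. \<forall>i.
           real (X n \<omega> i) / real ((\<Sum>j\<in>UNIV. x0 j) + n) \<ge> exp (- c * (F n / real n)))}"
        and nz: "\<omega> \<notin> Z"
      from nz w obtain l where l: "\<And>k. \<not> bad (real (Suc l)) k (X k \<omega>)"
        by (auto simp: Z_def Zl_def)
      define c where "c = real (Suc l) + ln (1 + real N) / F 1"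
      have cpos: "c > 0"
      proof -
        have "0 \<le> ln (1 + real N) / F 1" using Fpos[of 1] by simp
        then show ?thesis unfolding c_def by simp
      qed
      have "\<forall>n\<ge>1. \<forall>i. real (X n \<omega> i) / real ((\<Sum>j\<in>UNIV. x0 j) + n) \<ge> exp (- c * (F n / real n))"
      proof (intro allI impI)
        fix n i :: _ assume n1: "(n::nat) \<ge> 1"
        have gn: "good n (X n \<omega>)" and Dn: "Dpot F (X n \<omega>) < real (Suc l)"
          using l[of n] by (auto simp: bad_def)
        show "real (X n \<omega> i) / real ((\<Sum>j\<in>UNIV. x0 j) + n) \<ge> exp (- c * (F n / real n))"
          using final_det[OF Fpos Lmono, where y="X n \<omega>" and N=N and n=n and lam="real (Suc l)" and i=i] gn n1 Dn
          unfolding c_def good_def N_def by simp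
      qed
      with cpos w show False by auto
    qed
  qed
qed

end

theorem mainTheorem18:
  fixes M :: "'m measure" and F :: "nat \<Rightarrow> real" and x0 :: "'a::finite \<Rightarrow> nat"
    and X :: "nat \<Rightarrow> 'm \<Rightarrow> 'a \<Rightarrow> nat"
  assumes A2: "CARD('a) \<ge> 2"
    and Fpos: "\<And>k. F k > 0"
    and x0pos: "\<And>i. x0 i \<ge> 1"
    and urn: "polya_urn M F x0 X"
    and diverge: "\<not> summable (\<lambda>k. 1 / F (Suc k))"
    and Lmono: "\<And>k. k \<ge> 1 \<Longrightarrow> F k / real k \<le> F (Suc k) / real (Suc k)"
  shows "AE \<omega> in M. \<exists>c>0. \<forall>n\<ge>1. \<forall>i.
           real (X n \<omega> i) / real ((\<Sum>j\<in>UNIV. x0 j) + n) \<ge> exp (- c * (F n / real n))"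
proof -
  interpret urnL M F x0 X using urn Fpos Lmono by unfold_locales auto
  show ?thesis using x0pos by (rule final_AE)
qed

end
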